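(* Let $M>0$ and assume (Amax) and (Amin). Then the closure $\mathrm{Cl}(\mathcal D(M))$ of $\mathcal D(M)$ in $L^\infty([0,1])$ (supremum norm) is a compact subset of $C^0([0,1])$.
   Context: Fix integers $K\ge1$, $d\ge1$, $\sigma_-\in(0,1)$; $[K']=\{1,\dots,K'\}$; $\Delta_{K'}$ = probability vectors on $[K']$; $\Sigma^{\sigma_-}_{K'}$ = $K'\times K'$ stochastic matrices with all entries $\ge\sigma_-$; $\mathbb R_d[X]$ = real polynomials of degree $\le d$ viewed as functions on $\mathbb R_+$; $\Gamma$ a compact (for pointwise convergence) set of probability densities on $\mathbb R$. $\Theta=\bigcup_{K'=1}^K\{[K']\}\times\Delta_{K'}\times\Sigma^{\sigma_-}_{K'}\times\Gamma^{K'}\times(\mathbb R_d[X])^{K'}$, elements $\theta=(K^\theta,\pi^\theta,Q^\theta,\gamma^\theta,T^\theta)$ with trends $T^\theta_x\in\mathbb R_d[X]$. The true parameter is $\theta^*=(K^*,\pi^*,Q^*,\gamma^*,T^* )\in\Theta$. (Amax): there is a nonincreasing $g:\mathbb R_+\to\mathbb R_+$, $g\to0$ at $\infty$, with $\gamma(z)\le g(|z|)$ for all $\gamma\in\Gamma$. (Amin): there is a nonincreasing $m$ with $\gamma(z)\ge m(|z|)>0$ for all $\gamma\in\Gamma$. Blocks. $x\mathcal R^*x'$ iff $T^*_x-T^*_{x'}$ is constant; $\mathcal B^*=[K^*]/\mathcal R^*$, $\mathbf b^*$ the quotient map; $\mathbb T^*_b=T^*_{\min b}$; $\Delta(x)=T^*_x(1)-\mathbb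 T^*_{\mathbf b^*(x)}(1)$, $\|\Delta\|_\infty=\max_x|\Delta(x)|$. $E(t)=\min_{b\ne b'}|\mathbb T^*_b(t)-\mathbb T^*_{b'}(t)|$ ($+\infty$ if one block), $n_1(M)=\inf\{n:\forall t\ge n,\ E(t)>2M\}$. $\Theta^{OK}_n(M)$ is the set of $\theta\in\Theta$ such that every $x^*\in[K^*]$ has some $x\in[K^\theta]$ with $\sup_{[0,n]}|T^*_{x^*}-T^\theta_x|\le M$, and every $x\in[K^\theta]$ has some $x^*$ with $\sup_{[0,n]}|T^*_{x^*}-T^\theta_x|\le M$. For $n\ge n_1(M+\|\Delta\|_\infty)$ and $\theta\in\Theta^{OK}_n(M)$, $\mathbf b^\theta(x)$ is the unique $b\in\mathcal B^*$ with $\max_{t\in\{1,\dots,n\}}|\mathbb T^*_b(t)-T^\theta_x(t)|\le M+\|\Delta\|_\infty$, and $D^{\theta,n}_x:u\in[0,1]\mapsto T^\theta_x(nu)-\mathbb T^*_{\mathbf b^\theta(x)}(nu)$. Finally $\mathcal D(M)=\bigcup_{n\ge\max(4K(d+1),\,n_1(M+\|\Delta\|_\infty))}\{D^{\theta,n}_x:\theta\in\Theta^{OK}_n(M),x\in[K^\theta]\}$. *)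

theory Defs
  imports "HOL-Analysis.Analysis" "HOL-Computational_Algebra.Polynomial"
begin

text \<open>A parameter theta = (K', pi, Q, gamma, T); states are indexed by 1..K'.\<close>
type_synonym param =
  "nat \<times> (nat \<Rightarrow> real) \<times> (nat \<Rightarrow> nat \<Rightarrow> real) \<times> (nat \<Rightarrow> real \<Rightarrow> real) \<times> (nat \<Rightarrow> real poly)"

definition prob_density :: "(real \<Rightarrow> real) \<Rightarrow> bool" where
  "prob_density g \<longleftrightarrow> g \<in> borel_measurable borel \<and> (\<forall>z. 0 \<le> g z) \<and>
     (\<integral>\<^sup>+ z. ennreal (g z) \<partial>lborel) = 1"

definition prob_vectors :: "nat \<Rightarrow> (nat \<Rightarrow> real) set" where
  "prob_vectors K' = {p. (\<forall>x\<in>{1..K'}. 0 \<le> p x) \<and> (\<Sum>x=1..K'. p x) = 1}"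

definition stoch_matrices :: "real \<Rightarrow> nat \<Rightarrow> (nat \<Rightarrow> nat \<Rightarrow> real) set" where
  "stoch_matrices s K' = {Q. (\<forall>x\<in>{1..K'}. \<forall>y\<in>{1..K'}. s \<le> Q x y) \<and>
                            (\<forall>x\<in>{1..K'}. (\<Sum>y=1..K'. Q x y) = 1)}"

definition Theta :: "nat \<Rightarrow> nat \<Rightarrow> real \<Rightarrow> (real \<Rightarrow> real) set \<Rightarrow> param set" where
  "Theta K d s \<Gamma> = {(K', p, Q, g, T). 1 \<le> K' \<and> K' \<le> K \<and> p \<in> prob_vectors K' \<and>
       Q \<in> stoch_matrices s K' \<and> (\<forall>x\<in>{1..K'}. g x \<in> \<Gamma>) \<and> (\<forall>x\<in>{1..K'}. degree (T x) \<le> d)}"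

text \<open>Blocks of the true trends (Ks = K*, Ts = T*).\<close>
definition blockrel :: "nat \<Rightarrow> (nat \<Rightarrow> real poly) \<Rightarrow> (nat \<times> nat) set" where
  "blockrel Ks Ts = {(x, x'). x \<in> {1..Ks} \<and> x' \<in> {1..Ks} \<and>
       (\<exists>c. \<forall>t\<ge>0. poly (Ts x) t - poly (Ts x') t = c)}"

definition blocks :: "nat \<Rightarrow> (nat \<Rightarrow> real poly) \<Rightarrow> nat set set" where
  "blocks Ks Ts = {1..Ks} // blockrel Ks Ts"

definition bstar :: "nat \<Rightarrow> (nat \<Rightarrow> real poly) \<Rightarrow> nat \<Rightarrow> nat set" where
  "bstar Ks Ts x = blockrel Ks Ts `` {x}"

definition btrend :: "(nat \<Rightarrow> real poly) \<Rightarrow> nat set \<Rightarrow> real poly" where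
  "btrend Ts b = Ts (Min b)"

definition Delta :: "nat \<Rightarrow> (nat \<Rightarrow> real poly) \<Rightarrow> nat \<Rightarrow> real" where
  "Delta Ks Ts x = poly (Ts x) 1 - poly (btrend Ts (bstar Ks Ts x)) 1"

definition Delta_norm :: "nat \<Rightarrow> (nat \<Rightarrow> real poly) \<Rightarrow> real" where
  "Delta_norm Ks Ts = Max ((\<lambda>x. \<bar>Delta Ks Ts x\<bar>) ` {1..Ks})"

definition Egap :: "nat \<Rightarrow> (nat \<Rightarrow> real poly) \<Rightarrow> real \<Rightarrow> ereal" where
  "Egap Ks Ts t = (if \<exists>b\<in>blocks Ks Ts. \<exists>b'\<in>blocks Ks Ts. b \<noteq> b'
     then Min {ereal \<bar>poly (btrend Ts b) t - poly (btrend Ts b') t\<bar> | b b'.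
                 b \<in> blocks Ks Ts \<and> b' \<in> blocks Ks Ts \<and> b \<noteq> b'}
     else \<infinity>)"

definition n1 :: "nat \<Rightarrow> (nat \<Rightarrow> real poly) \<Rightarrow> real \<Rightarrow> nat" where
  "n1 Ks Ts M = Inf {n::nat. \<forall>t\<ge>real n. Egap Ks Ts t > ereal (2 * M)}"

definition ThetaOK :: "nat \<Rightarrow> nat \<Rightarrow> real \<Rightarrow> (real \<Rightarrow> real) set \<Rightarrow> nat \<Rightarrow> (nat \<Rightarrow> real poly)
     \<Rightarrow> nat \<Rightarrow> real \<Rightarrow> param set" where
  "ThetaOK K d s \<Gamma> Ks Ts n M = {\<theta> \<in> Theta K d s \<Gamma>. case \<theta> of (K', p, Q, g, T) \<Rightarrow>
      (\<forall>xs\<in>{1..Ks}. \<exists>x\<in>{1..K'}. \<forall>t\<in>{0..real n}. \<bar>poly (Ts xs) t - poly (T x) t\<bar> \<le> M) \<and>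
      (\<forall>x\<in>{1..K'}. \<exists>xs\<in>{1..Ks}. \<forall>t\<in>{0..real n}. \<bar>poly (Ts xs) t - poly (T x) t\<bar> \<le> M)}"

definition btheta :: "nat \<Rightarrow> (nat \<Rightarrow> real poly) \<Rightarrow> (nat \<Rightarrow> real poly) \<Rightarrow> nat \<Rightarrow> real \<Rightarrow> nat \<Rightarrow> nat set" where
  "btheta Ks Ts T n M x = (THE b. b \<in> blocks Ks Ts \<and>
      Max ((\<lambda>t::nat. \<bar>poly (btrend Ts b) (real t) - poly (T x) (real t)\<bar>) ` {1..n})
        \<le> M + Delta_norm Ks Ts)"

definition Dfun :: "nat \<Rightarrow> (nat \<Rightarrow> real poly) \<Rightarrow> (nat \<Rightarrow> real poly) \<Rightarrow> nat \<Rightarrow> real \<Rightarrow> nat \<Rightarrow> real \<Rightarrow> real" where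
  "Dfun Ks Ts T n M x = restrict (\<lambda>u. poly (T x) (real n * u)
       - poly (btrend Ts (btheta Ks Ts T n M x)) (real n * u)) {0..1}"

definition Dset :: "nat \<Rightarrow> nat \<Rightarrow> real \<Rightarrow> (real \<Rightarrow> real) set \<Rightarrow> nat \<Rightarrow> (nat \<Rightarrow> real poly)
     \<Rightarrow> real \<Rightarrow> (real \<Rightarrow> real) set" where
  "Dset K d s \<Gamma> Ks Ts M = (\<Union>n \<in> {n. max (4 * K * (d + 1)) (n1 Ks Ts (M + Delta_norm Ks Ts)) \<le> n}.
      {Dfun Ks Ts (snd (snd (snd (snd \<theta>)))) n M x | \<theta> x.
         \<theta> \<in> ThetaOK K d s \<Gamma> Ks Ts n M \<and> x \<in> {1..fst \<theta>}})"

abbreviation Linf01 :: "(real \<Rightarrow> real) metric" where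
  "Linf01 \<equiv> funspace {0..1} euclidean_metric"

abbreviation C01 :: "(real \<Rightarrow> real) metric" where
  "C01 \<equiv> cfunspace (top_of_set {0..1}) euclidean_metric"

end

theory Submission
  imports Defs
begin


definition upt_pt :: "nat \<Rightarrow> nat \<Rightarrow> real" where "upt_pt d i = real i / real d"

definition LP :: "nat \<Rightarrow> nat \<Rightarrow> real poly" where
  "LP d i = (\<Prod>j\<in>{0..d}-{i}. smult (1 / (upt_pt d i - upt_pt d j)) [:- upt_pt d j, 1:])"

lemma upt_pt_inj: "1 \<le> d \<Longrightarrow> upt_pt d i = upt_pt d j \<longleftrightarrow> i = j"
  by (auto simp: upt_pt_def divide_right_mono)

lemma degree_prod_sum_le': "finite S \<Longrightarrow> degree (prod f S) \<le> (\<Sum>j\<in>S. degree (f j))"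
  using degree_prod_sum_le[of S f] by (simp add: o_def)

lemma degree_LP: assumes "i \<le> d" shows "degree (LP d i) \<le> d"
proof -
  have "degree (LP d i) \<le> (\<Sum>j\<in>{0..d}-{i}. degree (smult (1 / (upt_pt d i - upt_pt d j)) [:- upt_pt d j, 1:]))"
    unfolding LP_def by (rule degree_prod_sum_le') simp
  also have "\<dots> \<le> (\<Sum>j\<in>{0..d}-{i}. 1)"
    by (rule sum_mono) (simp add: degree_smult_le)
  also have "\<dots> \<le> d" using assms by auto
  finally show ?thesis .
qed

lemma poly_LP_pt:
  assumes "1 \<le> d" "i \<le> d" "k \<le> d"
  shows "poly (LP d i) (upt_pt d k) = (if i = k then 1 else 0)"
proof (cases "i = k")
  case True
  have "poly (LP d i) (upt_pt d k) = (\<Prod>j\<in>{0..d}-{i}. 1)"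
    unfolding LP_def poly_prod
  proof (rule prod.cong)
    fix j assume "j \<in> {0..d}-{i}"
    then have "upt_pt d k - upt_pt d j \<noteq> 0" using True assms by (auto simp: upt_pt_inj)
    then show "poly (smult (1 / (upt_pt d i - upt_pt d j)) [:- upt_pt d j, 1:]) (upt_pt d k) = 1"
      using True by (simp add: divide_simps)
  qed simp
  then show ?thesis using True by simp
next
  case False
  have "poly (LP d i) (upt_pt d k) = 0"
    unfolding LP_def poly_prod
    by (rule prod_zero) (use False assms in \<open>auto intro!: bexI[of _ k]\<close>)
  then show ?thesis using False by simp
qed

lemma lagrange:
  fixes p :: "real poly"
  assumes d: "1 \<le> d" and dp: "degree p \<le> d"
  shows "p = (\<Sum>i\<in>{0..d}. smult (poly p (upt_pt d i)) (LP d i))"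
proof (rule ccontr)
  define Q where "Q = p - (\<Sum>i\<in>{0..d}. smult (poly p (upt_pt d i)) (LP d i))"
  assume "p \<noteq> (\<Sum>i\<in>{0..d}. smult (poly p (upt_pt d i)) (LP d i))"
  then have Q0: "Q \<noteq> 0" by (simp add: Q_def)
  have "degree (\<Sum>i\<in>{0..d}. smult (poly p (upt_pt d i)) (LP d i)) \<le> d"
    by (rule degree_sum_le) (auto simp: degree_LP)
  then have dQ: "degree Q \<le> d" unfolding Q_def using dp degree_diff_le by blast
  have roots: "upt_pt d ` {0..d} \<subseteq> {x. poly Q x = 0}"
  proof safe
    fix k assume k: "k \<in> {0..d}"
    have "(\<Sum>i\<in>{0..d}. poly p (upt_pt d i) * poly (LP d i) (upt_pt d k)) = 
          (\<Sum>i\<in>{0..d}. if i = k then poly p (upt_pt d k) else 0)"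
      by (rule sum.cong) (use k d in \<open>auto simp: poly_LP_pt\<close>)
    also have "\<dots> = poly p (upt_pt d k)" using k by simp
    finally show "poly Q (upt_pt d k) = 0" by (simp add: Q_def poly_sum)
  qed
  have "card (upt_pt d ` {0..d}) = d + 1"
    by (subst card_image) (auto simp: inj_on_def upt_pt_inj[OF d])
  moreover have "card (upt_pt d ` {0..d}) \<le> card {x. poly Q x = 0}"
    by (rule card_mono[OF poly_roots_finite[OF Q0] roots])
  moreover have "card {x. poly Q x = 0} \<le> degree Q" by (rule card_poly_roots_bound[OF Q0])
  ultimately show False using dQ by simp
qed

lemma LP_bound:
  assumes d: "1 \<le> d" and i: "i \<le> d" and v: "v \<in> {0..1}"
  shows "\<bar>poly (LP d i) v\<bar> \<le> real d ^ d"
proof -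
  have "\<bar>poly (LP d i) v\<bar> = (\<Prod>j\<in>{0..d}-{i}. \<bar>(v - upt_pt d j) / (upt_pt d i - upt_pt d j)\<bar>)"
    unfolding LP_def poly_prod abs_prod by (rule prod.cong) (auto simp: abs_divide simp flip: diff_divide_distrib)
  also have "\<dots> \<le> (\<Prod>j\<in>{0..d}-{i}. real d)"
  proof (rule prod_mono, safe)
    fix j assume j: "j \<in> {0..d}" "j \<noteq> i"
    have h: "0 \<le> real j / real d" "real j / real d \<le> 1" "0 \<le> v" "v \<le> 1" using j d v by auto
    then have a: "\<bar>v - upt_pt d j\<bar> \<le> 1" unfolding upt_pt_def by (intro abs_leI) linarith+
    have "\<bar>upt_pt d i - upt_pt d j\<bar> = \<bar>real i - real j\<bar> / real d"
      by (simp add: upt_pt_def abs_divide flip: diff_divide_distrib)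
    moreover have "1 \<le> \<bar>real i - real j\<bar>" using j by linarith
    ultimately have b: "1 / real d \<le> \<bar>upt_pt d i - upt_pt d j\<bar>"
      by (simp add: divide_right_mono)
    have dpos: "0 < real d" using d by simp
    have bpos: "0 < \<bar>upt_pt d i - upt_pt d j\<bar>" using b dpos
      by (smt (verit) divide_pos_pos)
    have "\<bar>(v - upt_pt d j) / (upt_pt d i - upt_pt d j)\<bar> = \<bar>v - upt_pt d j\<bar> / \<bar>upt_pt d i - upt_pt d j\<bar>"
      by (simp add: abs_divide)
    also have "\<dots> \<le> 1 / \<bar>upt_pt d i - upt_pt d j\<bar>"
      by (rule divide_right_mono[OF a]) simp
    also have "\<dots> \<le> 1 / (1 / real d)"
      by (rule divide_left_mono[OF b]) (use bpos dpos in auto)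
    also have "\<dots> = real d" by simp
    finally show "\<bar>(v - upt_pt d j) / (upt_pt d i - upt_pt d j)\<bar> \<le> real d" .
  qed simp
  also have "\<dots> = real d ^ d" using i by simp
  finally show ?thesis .
qed

lemma aux_arith: "0 < (k::real) \<Longrightarrow> 0 < a \<Longrightarrow> k * (e / (2*k*a) * a) = e/2"
  by (simp add: divide_simps)

lemma restrict_poly_C01:
  "restrict (poly p) {0..1} \<in> mspace C01"
proof -
  have c: "continuous_on {0..1::real} (poly p)" by (intro continuous_intros)
  have "continuous_on {0..1::real} (restrict (poly p) {0..1})"
    by (rule continuous_on_eq[OF c]) simp
  moreover have "bounded (restrict (poly p) {0..1} ` {0..1::real})"
    using compact_imp_bounded[OF compact_continuous_image[OF c compact_Icc]] by simp
  ultimately show ?thesis by simp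
qed

lemma C01_sub: "mspace C01 \<subseteq> mspace Linf01"
  using cfunspace_subset_funspace[of "top_of_set {0..1::real}" euclidean_metric] by simp

lemma poly_family_compact:
  assumes d: "1 \<le> d" and B: "0 \<le> B"
  obtains I where "compactin (mtopology_of Linf01) I" "I \<subseteq> mspace C01"
     "\<And>p. degree p \<le> d \<Longrightarrow> (\<forall>u\<in>{0..1}. \<bar>poly p u\<bar> \<le> B) \<Longrightarrow> restrict (poly p) {0..1} \<in> I"
proof -
  define F where "F y = restrict (poly (\<Sum>i\<in>{0..d}. smult (y i) (LP d i))) {0..1}" for y :: "nat \<Rightarrow> real"
  define Y where "Y = PiE {0..d} (\<lambda>_. {-B..B})"
  define X where "X = product_topology (\<lambda>_. euclideanreal) {0..d}"
  have FC: "F y \<in> mspace C01" for y unfolding F_def by (rule restrict_poly_C01)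
  have FL: "F y \<in> mspace Linf01" for y using FC C01_sub by blast
  interpret L: Metric_space "mspace Linf01" "mdist Linf01" by (rule Metric_space_mspace_mdist)
  have cont: "continuous_map X (mtopology_of Linf01) F"
    unfolding mtopology_of_def L.continuous_map_to_metric
  proof (intro ballI allI impI)
    fix x and e :: real assume x: "x \<in> topspace X" and e: "0 < e"
    define c where "c = 2 * (real d + 1) * real d ^ d"
    have c: "0 < c" using d by (simp add: c_def)
    define \<delta> where "\<delta> = e / c"
    have \<delta>: "0 < \<delta>" using e c by (simp add: \<delta>_def)
    define U where "U = PiE {0..d} (\<lambda>i. ball (x i) \<delta>)"
    show "\<exists>U. openin X U \<and> x \<in> U \<and> (\<forall>y\<in>U. F y \<in> L.mball (F x) e)"
    proof (intro exI conjI ballI)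
      show "openin X U" unfolding X_def U_def by (simp add: openin_PiE)
      show "x \<in> U" using x \<delta> by (simp add: U_def X_def PiE_iff)
      fix y assume y: "y \<in> U"
      have "mdist Linf01 (F x) (F y) \<le> e / 2"
      proof (subst funspace_mdist_le)
        show "F x \<in> mspace Linf01" "F y \<in> mspace Linf01" by (rule FL)+
        show "{0..1::real} \<noteq> {}" by simp
        show "\<forall>v\<in>{0..1}. mdist euclidean_metric (F x v) (F y v) \<le> e / 2"
        proof
          fix v :: real assume v: "v \<in> {0..1}"
          have "mdist euclidean_metric (F x v) (F y v) = \<bar>\<Sum>i\<in>{0..d}. (x i - y i) * poly (LP d i) v\<bar>"
            using v by (simp add: F_def poly_sum dist_real_def sum_subtractf[symmetric] algebra_simps)
          also have "\<dots> \<le> (\<Sum>i\<in>{0..d}. \<bar>(x i - y i) * poly (LP d i) v\<bar>)" by (rule sum_abs)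
          also have "\<dots> \<le> (\<Sum>i\<in>{0..d}. \<delta> * real d ^ d)"
          proof (rule sum_mono)
            fix i assume i: "i \<in> {0..d}"
            have "\<bar>x i - y i\<bar> < \<delta>" using y i by (auto simp: U_def PiE_iff dist_real_def)
            then have "\<bar>x i - y i\<bar> \<le> \<delta>" by simp
            moreover have "\<bar>poly (LP d i) v\<bar> \<le> real d ^ d" using LP_bound[OF d _ v] i by simp
            ultimately show "\<bar>(x i - y i) * poly (LP d i) v\<bar> \<le> \<delta> * real d ^ d"
              unfolding abs_mult by (rule mult_mono) (use \<delta> in auto)
          qed
          also have "\<dots> = (real d + 1) * (\<delta> * real d ^ d)" by simp
          also have "\<dots> = e / 2"
          proof -
            have p: "real d ^ d > 0" "real d + 1 > 0" using d by auto
            show ?thesis unfolding \<delta>_def c_def using aux_arith[OF p(2) p(1)] by (simp add: mult.assoc)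
          qed
          finally show "mdist euclidean_metric (F x v) (F y v) \<le> e / 2" .
        qed
      qed
      then show "F y \<in> L.mball (F x) e" unfolding L.in_mball using e by (intro conjI FL) linarith
    qed
  qed
  have cY: "compactin X Y" unfolding X_def Y_def by (simp add: compactin_PiE)
  show thesis
  proof
    show "compactin (mtopology_of Linf01) (F ` Y)" by (rule image_compactin[OF cY cont])
    show "F ` Y \<subseteq> mspace C01" using FC by blast
    fix p :: "real poly" assume dp: "degree p \<le> d" and pb: "\<forall>u\<in>{0..1}. \<bar>poly p u\<bar> \<le> B"
    define y where "y = restrict (\<lambda>i. poly p (upt_pt d i)) {0..d}"
    have "y \<in> Y" unfolding Y_def y_def
    proof (rule PiE_I)
      fix i assume i: "i \<in> {0..d}"
      have "upt_pt d i \<in> {0..1}" using i d by (auto simp: upt_pt_def)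
      then show "restrict (\<lambda>i. poly p (upt_pt d i)) {0..d} i \<in> {- B..B}" using pb i by force
    qed simp
    moreover have "F y = restrict (poly p) {0..1}"
    proof -
      have "(\<Sum>i\<in>{0..d}. smult (y i) (LP d i)) = (\<Sum>i\<in>{0..d}. smult (poly p (upt_pt d i)) (LP d i))"
        by (rule sum.cong) (auto simp: y_def)
      also have "\<dots> = p" using lagrange[OF d dp] by simp
      finally show ?thesis by (simp add: F_def)
    qed
    ultimately show "restrict (poly p) {0..1} \<in> F ` Y" by (metis imageI)
  qed
qed



lemma blockrel_iff: "(a, b) \<in> blockrel Ks Ts \<longleftrightarrow> a \<in> {1..Ks} \<and> b \<in> {1..Ks} \<and>
       (\<exists>c. \<forall>t\<ge>0. poly (Ts a) t - poly (Ts b) t = c)"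
  by (simp add: blockrel_def)

lemma blockrel_equiv: "equiv {1..Ks} (blockrel Ks Ts)"
proof (rule equivI)
  show "blockrel Ks Ts \<subseteq> {1..Ks} \<times> {1..Ks}" by (auto simp: blockrel_def)
  show "refl_on {1..Ks} (blockrel Ks Ts)"
  proof (rule refl_onI)
    fix x assume x: "x \<in> {1..Ks}"
    have "\<forall>t\<ge>0. poly (Ts x) t - poly (Ts x) t = (0::real)" by simp
    then show "(x, x) \<in> blockrel Ks Ts" unfolding blockrel_iff using x by blast
  qed
  show "sym (blockrel Ks Ts)"
  proof (rule symI)
    fix a b assume "(a, b) \<in> blockrel Ks Ts"
    then obtain c where ab: "a \<in> {1..Ks}" "b \<in> {1..Ks}" and c: "\<forall>t\<ge>0. poly (Ts a) t - poly (Ts b) t = c"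
      unfolding blockrel_iff by blast
    have "\<forall>t\<ge>0. poly (Ts b) t - poly (Ts a) t = - c"
    proof (intro allI impI)
      fix t :: real assume "0 \<le> t" then have "poly (Ts a) t - poly (Ts b) t = c" using c by blast
      then show "poly (Ts b) t - poly (Ts a) t = - c" by linarith
    qed
    then show "(b, a) \<in> blockrel Ks Ts" unfolding blockrel_iff using ab by blast
  qed
  show "trans (blockrel Ks Ts)"
  proof (rule transI)
    fix a b e assume "(a, b) \<in> blockrel Ks Ts" "(b, e) \<in> blockrel Ks Ts"
    then obtain c c' where ae: "a \<in> {1..Ks}" "e \<in> {1..Ks}" and c: "\<forall>t\<ge>0. poly (Ts a) t - poly (Ts b) t = c"
       and c': "\<forall>t\<ge>0. poly (Ts b) t - poly (Ts e) t = c'"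
      unfolding blockrel_iff by blast
    have "\<forall>t\<ge>0. poly (Ts a) t - poly (Ts e) t = c + c'"
    proof (intro allI impI)
      fix t :: real assume "0 \<le> t" 
      then have "poly (Ts a) t - poly (Ts b) t = c" "poly (Ts b) t - poly (Ts e) t = c'" using c c' by blast+
      then show "poly (Ts a) t - poly (Ts e) t = c + c'" by linarith
    qed
    then show "(a, e) \<in> blockrel Ks Ts" unfolding blockrel_iff using ae by blast
  qed
qed

lemma block_props:
  assumes "b \<in> blocks Ks Ts"
  shows "b \<noteq> {}" "b \<subseteq> {1..Ks}" "finite b" "Min b \<in> b" "Min b \<in> {1..Ks}"
proof -
  show "b \<noteq> {}" using in_quotient_imp_non_empty[OF blockrel_equiv] assms by (simp add: blocks_def)
  moreover show s: "b \<subseteq> {1..Ks}" using in_quotient_imp_subset[OF blockrel_equiv] assms by (simp add: blocks_def)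
  moreover show f: "finite b" using s finite_subset by blast
  ultimately show "Min b \<in> b" by simp
  then show "Min b \<in> {1..Ks}" using s by blast
qed

lemma bstar_props:
  assumes x: "x \<in> {1..Ks}"
  shows "bstar Ks Ts x \<in> blocks Ks Ts" "x \<in> bstar Ks Ts x"
    "\<And>t. 0 \<le> t \<Longrightarrow> poly (Ts x) t - poly (btrend Ts (bstar Ks Ts x)) t = Delta Ks Ts x"
proof -
  show b: "bstar Ks Ts x \<in> blocks Ks Ts" unfolding bstar_def blocks_def by (rule quotientI[OF x])
  show "x \<in> bstar Ks Ts x" unfolding bstar_def
    using blockrel_equiv x by (metis equiv_class_self)
  have "Min (bstar Ks Ts x) \<in> bstar Ks Ts x" using block_props(4)[OF b] .
  then have "(x, Min (bstar Ks Ts x)) \<in> blockrel Ks Ts" by (simp add: bstar_def)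
  then obtain c where c: "\<forall>t\<ge>0. poly (Ts x) t - poly (Ts (Min (bstar Ks Ts x))) t = c"
    by (auto simp: blockrel_iff)
  fix t :: real assume t: "0 \<le> t"
  have "Delta Ks Ts x = c" using c by (simp add: Delta_def btrend_def)
  then show "poly (Ts x) t - poly (btrend Ts (bstar Ks Ts x)) t = Delta Ks Ts x"
    using c t by (simp add: btrend_def)
qed

lemma Delta_le: "x \<in> {1..Ks} \<Longrightarrow> \<bar>Delta Ks Ts x\<bar> \<le> Delta_norm Ks Ts"
  unfolding Delta_norm_def by (rule Max_ge) auto


lemma blocks_distinct_nonconst:
  assumes b: "b \<in> blocks Ks Ts" and b': "b' \<in> blocks Ks Ts" and ne: "b \<noteq> b'"
  shows "\<not> (\<exists>c. \<forall>t\<ge>0. poly (btrend Ts b) t - poly (btrend Ts b') t = c)"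
proof
  assume "\<exists>c. \<forall>t\<ge>0. poly (btrend Ts b) t - poly (btrend Ts b') t = c"
  then have "(Min b, Min b') \<in> blockrel Ks Ts"
    using block_props(5)[OF b] block_props(5)[OF b'] by (auto simp: blockrel_iff btrend_def)
  then have "b = b'"
    using quotient_eq_iff[OF blockrel_equiv, of b Ks Ts b'] b b' block_props(4)[OF b] block_props(4)[OF b']
    by (simp add: blocks_def)
  with ne show False ..
qed

lemma poly_eventually_large:
  fixes P :: "real poly"
  assumes nc: "\<not> (\<exists>c. \<forall>t\<ge>0. poly P t = c)"
  shows "\<forall>\<^sub>F t in at_top. C < \<bar>poly P t\<bar>"
proof -
  have "degree P > 0"
  proof (rule ccontr)
    assume "\<not> degree P > 0"
    then have "degree P = 0" by simp
    then obtain a where "P = [:a:]" using degree0_coeffs by blast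
    then have "\<forall>t. poly P t = a" by simp
    with nc show False by blast
  qed
  then have "filterlim (poly P) at_infinity at_infinity" by (rule filterlim_poly_at_infinity)
  then have "filterlim (poly P) at_infinity at_top"
    by (rule filterlim_mono[OF _ order_refl at_top_le_at_infinity])
  then have "\<forall>\<^sub>F t in at_top. max C 0 + 1 \<le> norm (poly P t)"
    using filterlim_at_infinity[of 0 "poly P" at_top] by auto
  then show ?thesis by eventually_elim auto
qed




lemma setcompr_image2: "{f x y | x y. P x y} = (\<lambda>p. f (fst p) (snd p)) ` {p. P (fst p) (snd p)}"
  unfolding image_def by auto
lemma n1_mem:
  fixes C :: real
  shows "\<forall>t\<ge>real (n1 Ks Ts C). Egap Ks Ts t > ereal (2 * C)"
proof -
  define S where "S = {n::nat. \<forall>t\<ge>real n. Egap Ks Ts t > ereal (2 * C)}"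
  have "S \<noteq> {}"
  proof (cases "\<exists>b\<in>blocks Ks Ts. \<exists>b'\<in>blocks Ks Ts. b \<noteq> b'")
    case False
    then have "0 \<in> S" by (simp add: S_def Egap_def)
    then show ?thesis by blast
  next
    case True
    define Pairs where "Pairs = {(b, b'). b \<in> blocks Ks Ts \<and> b' \<in> blocks Ks Ts \<and> b \<noteq> b'}"
    have fb: "finite (blocks Ks Ts)"
    proof -
      have "blocks Ks Ts \<subseteq> Pow {1..Ks}" using block_props(2) by blast
      then show ?thesis by (rule finite_subset) simp
    qed
    have fP: "finite Pairs" unfolding Pairs_def
      by (rule finite_subset[of _ "blocks Ks Ts \<times> blocks Ks Ts"]) (auto simp: fb)
    have "\<forall>p\<in>Pairs. \<forall>\<^sub>F t in at_top. 2 * C < \<bar>poly (btrend Ts (fst p)) t - poly (btrend Ts (snd p)) t\<bar>"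
    proof
      fix p assume "p \<in> Pairs"
      then obtain b b' where p: "p = (b, b')" "b \<in> blocks Ks Ts" "b' \<in> blocks Ks Ts" "b \<noteq> b'"
        by (auto simp: Pairs_def)
      have "\<not> (\<exists>c. \<forall>t\<ge>0. poly (btrend Ts b - btrend Ts b') t = c)"
        using blocks_distinct_nonconst[OF p(2-4)] by simp
      from poly_eventually_large[OF this, of "2 * C"]
      show "\<forall>\<^sub>F t in at_top. 2 * C < \<bar>poly (btrend Ts (fst p)) t - poly (btrend Ts (snd p)) t\<bar>"
        using p by simp
    qed
    from eventually_ball_finite[OF fP this]
    obtain N :: real where N: "\<And>t. t \<ge> N \<Longrightarrow> \<forall>p\<in>Pairs. 2 * C < \<bar>poly (btrend Ts (fst p)) t - poly (btrend Ts (snd p)) t\<bar>"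
      by (auto simp: eventually_at_top_linorder)
    have "nat \<lceil>N\<rceil> \<in> S" unfolding S_def
    proof (intro CollectI allI impI)
      fix t assume "real (nat \<lceil>N\<rceil>) \<le> t"
      then have "t \<ge> N" by linarith
      note Nt = N[OF this]
      define E where "E = {ereal \<bar>poly (btrend Ts b) t - poly (btrend Ts b') t\<bar> | b b'.
                 b \<in> blocks Ks Ts \<and> b' \<in> blocks Ks Ts \<and> b \<noteq> b'}"
      have "E = (\<lambda>p. ereal \<bar>poly (btrend Ts (fst p)) t - poly (btrend Ts (snd p)) t\<bar>) ` Pairs"
      proof -
        have PP: "Pairs = {p. fst p \<in> blocks Ks Ts \<and> snd p \<in> blocks Ks Ts \<and> fst p \<noteq> snd p}"
          unfolding Pairs_def by auto
        show ?thesis unfolding E_def setcompr_image2 PP by simp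
      qed
      moreover have "Pairs \<noteq> {}" using True by (auto simp: Pairs_def)
      ultimately have fE: "finite E" and nE: "E \<noteq> {}" using fP by auto
      have "\<forall>e\<in>E. ereal (2 * C) < e"
      proof
        fix e assume "e \<in> E"
        then obtain b b' where "e = ereal \<bar>poly (btrend Ts b) t - poly (btrend Ts b') t\<bar>"
          "(b, b') \<in> Pairs" by (auto simp: E_def Pairs_def)
        then show "ereal (2 * C) < e" using Nt by force
      qed
      then have "ereal (2 * C) < Min E" using fE nE by simp
      then show "ereal (2 * C) < Egap Ks Ts t" using True by (simp add: Egap_def E_def)
    qed
    then show ?thesis by blast
  qed
  then have "Inf S \<in> S" by (rule Inf_nat_def1)
  then show ?thesis by (simp add: S_def n1_def)
qed

lemma Egap_le:
  assumes "b \<in> blocks Ks Ts" "b' \<in> blocks Ks Ts" "b \<noteq> b'"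
  shows "Egap Ks Ts t \<le> ereal \<bar>poly (btrend Ts b) t - poly (btrend Ts b') t\<bar>"
proof -
  have fb: "finite (blocks Ks Ts)"
  proof -
    have "blocks Ks Ts \<subseteq> Pow {1..Ks}" using block_props(2) by blast
    then show ?thesis by (rule finite_subset) simp
  qed
  define E where "E = {ereal \<bar>poly (btrend Ts b) t - poly (btrend Ts b') t\<bar> | b b'.
                 b \<in> blocks Ks Ts \<and> b' \<in> blocks Ks Ts \<and> b \<noteq> b'}"
  have "{p. fst p \<in> blocks Ks Ts \<and> snd p \<in> blocks Ks Ts \<and> fst p \<noteq> snd p} \<subseteq> blocks Ks Ts \<times> blocks Ks Ts"
    by auto
  then have "finite {p. fst p \<in> blocks Ks Ts \<and> snd p \<in> blocks Ks Ts \<and> fst p \<noteq> snd p}"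
    using fb finite_subset by blast
  then have "finite E" unfolding E_def setcompr_image2 by blast
  then have "Min E \<le> ereal \<bar>poly (btrend Ts b) t - poly (btrend Ts b') t\<bar>"
    by (rule Min_le) (use assms in \<open>auto simp: E_def\<close>)
  then show ?thesis using assms by (auto simp: Egap_def E_def)
qed



lemma Dset_sub:
  assumes truth: "(Ks, ps, Qs, gs, Ts) \<in> Theta K d s \<Gamma>" and d: "1 \<le> d" and K: "1 \<le> K"
    and f: "f \<in> Dset K d s \<Gamma> Ks Ts M"
  shows "\<exists>P. degree P \<le> d \<and> (\<forall>u\<in>{0..1}. \<bar>poly P u\<bar> \<le> M + Delta_norm Ks Ts) \<and> f = restrict (poly P) {0..1}"
proof -
  define B where "B = M + Delta_norm Ks Ts"
  obtain n \<theta> x where n: "max (4 * K * (d + 1)) (n1 Ks Ts B) \<le> n" and th: "\<theta> \<in> ThetaOK K d s \<Gamma> Ks Ts n M"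
    and x: "x \<in> {1..fst \<theta>}" and fD: "f = Dfun Ks Ts (snd (snd (snd (snd \<theta>)))) n M x"
    using f unfolding Dset_def B_def by blast
  obtain K' p Q g T where thd: "\<theta> = (K', p, Q, g, T)" by (cases \<theta>) blast
  have tdeg: "\<And>y. y \<in> {1..Ks} \<Longrightarrow> degree (Ts y) \<le> d" using truth by (auto simp: Theta_def)
  have thT: "(K', p, Q, g, T) \<in> Theta K d s \<Gamma>" using th thd by (simp add: ThetaOK_def)
  have x': "x \<in> {1..K'}" using x thd by simp
  have Tdeg: "degree (T x) \<le> d" using thT x' by (simp add: Theta_def)
  obtain xs where xs: "xs \<in> {1..Ks}" and close: "\<forall>t\<in>{0..real n}. \<bar>poly (Ts xs) t - poly (T x) t\<bar> \<le> M"
  proof -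
    have "\<forall>x\<in>{1..K'}. \<exists>xs\<in>{1..Ks}. \<forall>t\<in>{0..real n}. \<bar>poly (Ts xs) t - poly (T x) t\<bar> \<le> M"
      using th thd by (simp add: ThetaOK_def)
    then show thesis using x' that by blast
  qed
  define b where "b = bstar Ks Ts xs"
  have hb: "b \<in> blocks Ks Ts" unfolding b_def by (rule bstar_props(1)[OF xs])
  have bnd: "\<bar>poly (btrend Ts b) t - poly (T x) t\<bar> \<le> B" if t: "t \<in> {0..real n}" for t
  proof -
    have "poly (Ts xs) t - poly (btrend Ts b) t = Delta Ks Ts xs"
      unfolding b_def by (rule bstar_props(3)[OF xs]) (use t in auto)
    moreover have "\<bar>poly (Ts xs) t - poly (T x) t\<bar> \<le> M" using close t by blast
    moreover have "\<bar>Delta Ks Ts xs\<bar> \<le> Delta_norm Ks Ts" by (rule Delta_le[OF xs])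
    ultimately show ?thesis unfolding B_def by linarith
  qed
  have n1: "1 \<le> n" using n K by (simp add: max_def split: if_splits)
  have nn1: "n1 Ks Ts B \<le> n" using n by simp
  have Eg: "Egap Ks Ts (real n) > ereal (2 * B)"
    using n1_mem[of Ks Ts B] nn1 by simp
  have fin: "finite ((\<lambda>t::nat. \<bar>poly (btrend Ts c) (real t) - poly (T x) (real t)\<bar>) ` {1..n})" for c by simp
  have ne: "(\<lambda>t::nat. \<bar>poly (btrend Ts c) (real t) - poly (T x) (real t)\<bar>) ` {1..n} \<noteq> {}" for c using n1 by simp
  have bth: "btheta Ks Ts T n M x = b"
    unfolding btheta_def B_def[symmetric]
  proof (rule the_equality)
    show "b \<in> blocks Ks Ts \<and> Max ((\<lambda>t::nat. \<bar>poly (btrend Ts b) (real t) - poly (T x) (real t)\<bar>) ` {1..n}) \<le> B"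
      unfolding Max_le_iff[OF fin ne] using hb bnd by auto
    fix b' assume b': "b' \<in> blocks Ks Ts \<and> Max ((\<lambda>t::nat. \<bar>poly (btrend Ts b') (real t) - poly (T x) (real t)\<bar>) ` {1..n}) \<le> B"
    show "b' = b"
    proof (rule ccontr)
      assume neq: "b' \<noteq> b"
      have "\<bar>poly (btrend Ts b') (real n) - poly (T x) (real n)\<bar> \<le> B"
        using b' n1 unfolding Max_le_iff[OF fin ne] by auto
      moreover have "\<bar>poly (btrend Ts b) (real n) - poly (T x) (real n)\<bar> \<le> B" using bnd by simp
      ultimately have "\<bar>poly (btrend Ts b) (real n) - poly (btrend Ts b') (real n)\<bar> \<le> 2 * B" by linarith
      moreover have "Egap Ks Ts (real n) \<le> ereal \<bar>poly (btrend Ts b) (real n) - poly (btrend Ts b') (real n)\<bar>"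
        by (rule Egap_le[OF hb]) (use b' neq in auto)
      ultimately show False using Eg by (meson ereal_less_eq(3) leD order_trans)
    qed
  qed
  define P where "P = pcompose (T x - btrend Ts b) [:0, real n:]"
  have polyP: "poly P u = poly (T x) (real n * u) - poly (btrend Ts b) (real n * u)" for u
    by (simp add: P_def poly_pcompose mult.commute)
  have bdeg: "degree (btrend Ts b) \<le> d"
    unfolding btrend_def by (rule tdeg[OF block_props(5)[OF hb]])
  have "degree P \<le> degree (T x - btrend Ts b) * degree [:0, real n:]"
    unfolding P_def by (rule degree_pcompose_le)
  also have "\<dots> \<le> degree (T x - btrend Ts b)" by simp
  also have "\<dots> \<le> d" using Tdeg bdeg degree_diff_le by blast
  finally have dP: "degree P \<le> d" .
  have bP: "\<forall>u\<in>{0..1}. \<bar>poly P u\<bar> \<le> B"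
  proof
    fix u :: real assume u: "u \<in> {0..1}"
    have "real n * u \<le> real n * 1" using u by (intro mult_left_mono) auto
    then have "real n * u \<in> {0..real n}" using u by auto
    from bnd[OF this] show "\<bar>poly P u\<bar> \<le> B" unfolding polyP by linarith
  qed
  have "f = restrict (poly P) {0..1}"
    unfolding fD thd by (simp add: Dfun_def bth polyP[symmetric] restrict_def)
  with dP bP show ?thesis unfolding B_def by blast
qed

theorem proposition5:
  fixes K d :: nat and s M :: real and \<Gamma> :: "(real \<Rightarrow> real) set"
    and Ks :: nat and ps :: "nat \<Rightarrow> real" and Qs :: "nat \<Rightarrow> nat \<Rightarrow> real"
    and gs :: "nat \<Rightarrow> real \<Rightarrow> real" and Ts :: "nat \<Rightarrow> real poly"
  assumes K: "1 \<le> K" and d: "1 \<le> d" and s: "0 < s" "s < 1"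
    and dens: "\<forall>g\<in>\<Gamma>. prob_density g"
    and cpt: "compact \<Gamma>"
    and truth: "(Ks, ps, Qs, gs, Ts) \<in> Theta K d s \<Gamma>"
    and Amax: "\<exists>G::real \<Rightarrow> real. (\<forall>a b. 0 \<le> a \<longrightarrow> a \<le> b \<longrightarrow> G b \<le> G a) \<and> (\<forall>a\<ge>0. 0 \<le> G a)
                 \<and> (G \<longlongrightarrow> 0) at_top \<and> (\<forall>g\<in>\<Gamma>. \<forall>z. g z \<le> G \<bar>z\<bar>)"
    and Amin: "\<exists>m::real \<Rightarrow> real. (\<forall>a b. 0 \<le> a \<longrightarrow> a \<le> b \<longrightarrow> m b \<le> m a) \<and> (\<forall>a\<ge>0. 0 < m a)
                 \<and> (\<forall>g\<in>\<Gamma>. \<forall>z. m \<bar>z\<bar> \<le> g z)"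
    and M: "0 < M"
  shows "mtopology_of Linf01 closure_of Dset K d s \<Gamma> Ks Ts M \<subseteq> mspace C01 \<and>
         compactin (mtopology_of C01) (mtopology_of Linf01 closure_of Dset K d s \<Gamma> Ks Ts M)"
proof -
  define B where "B = M + Delta_norm Ks Ts"
  have Ks: "1 \<le> Ks" using truth by (simp add: Theta_def)
  have "\<bar>Delta Ks Ts 1\<bar> \<le> Delta_norm Ks Ts" by (rule Delta_le) (use Ks in auto)
  then have B0: "0 \<le> B" using M unfolding B_def by linarith
  obtain I where cI: "compactin (mtopology_of Linf01) I" and IC: "I \<subseteq> mspace C01"
    and memI: "\<And>p. degree p \<le> d \<Longrightarrow> (\<forall>u\<in>{0..1}. \<bar>poly p u\<bar> \<le> B) \<Longrightarrow> restrict (poly p) {0..1} \<in> I"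
    using poly_family_compact[OF d B0] by blast
  have DI: "Dset K d s \<Gamma> Ks Ts M \<subseteq> I"
  proof
    fix f assume "f \<in> Dset K d s \<Gamma> Ks Ts M"
    from Dset_sub[OF truth d K this] obtain P where
      "degree P \<le> d" "\<forall>u\<in>{0..1}. \<bar>poly P u\<bar> \<le> B" "f = restrict (poly P) {0..1}"
      unfolding B_def by blast
    then show "f \<in> I" using memI by blast
  qed
  have H: "Hausdorff_space (mtopology_of Linf01)"
    unfolding mtopology_of_def by (rule Metric_space.Hausdorff_space_mtopology[OF Metric_space_mspace_mdist])
  have clI: "closedin (mtopology_of Linf01) I" by (rule compactin_imp_closedin[OF H cI])
  have sub: "mtopology_of Linf01 closure_of Dset K d s \<Gamma> Ks Ts M \<subseteq> I"
    by (rule closure_of_minimal[OF DI clI])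
  have ccl: "compactin (mtopology_of Linf01) (mtopology_of Linf01 closure_of Dset K d s \<Gamma> Ks Ts M)"
    by (rule closed_compactin[OF cI sub closedin_closure_of])
  have subC: "mtopology_of Linf01 closure_of Dset K d s \<Gamma> Ks Ts M \<subseteq> mspace C01"
    using sub IC by blast
  have top: "mtopology_of C01 = subtopology (mtopology_of Linf01) (Collect (continuous_map (top_of_set {0..1::real}) euclideanreal))"
    unfolding cfunspace_def mtopology_of_submetric by simp
  have "mtopology_of Linf01 closure_of Dset K d s \<Gamma> Ks Ts M \<subseteq> (Collect (continuous_map (top_of_set {0..1::real}) euclideanreal))"
    using subC by auto
  then have "compactin (mtopology_of C01) (mtopology_of Linf01 closure_of Dset K d s \<Gamma> Ks Ts M)"
    unfolding top compactin_subtopology using ccl by blast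
  with subC show ?thesis by blast
qed

end
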